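(* Identify the tangent space of $\mathbb OP^{(1,1)}$ at $P_0=[1,0,0]$ with $\mathbb O^2$ via the chart $[1,u,v]\mapsto(u,v)$, a pair $(a,b)$ corresponding to the tangent vector with $du=a$, $dv=b$. Then the Riemann curvature tensor of $(\mathbb OP^{(1,1)},g)$ at $P_0$ is $$\begin{aligned}R\big((a,b),(c,d),(e,f),(g,h)\big)=&\,4\langle a,e\rangle\langle c,g\rangle-4\langle c,e\rangle\langle a,g\rangle+4\langle b,f\rangle\langle d,h\rangle-4\langle d,f\rangle\langle b,h\rangle\\&+\langle e\bar d,g\bar b\rangle-\langle e\bar b,g\bar d\rangle+\langle c\bar f,a\bar h\rangle-\langle a\bar f,c\bar h\rangle+\langle a\bar d-c\bar b,\ g\bar f-e\bar h\rangle.\end{aligned}$$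
   Context: Octonions $\mathbb O=\mathbb H\oplus\mathbb H$ with product $(q_1,q_2)(p_1,p_2)=(q_1p_1-\bar p_2q_2,\ p_2q_1+q_2\bar p_1)$, conjugation $\overline{(q_1,q_2)}=(\bar q_1,-q_2)$, $\langle a,b\rangle=\mathrm{Re}(a\bar b)$, $|a|^2=\langle a,a\rangle$. $\mathbb OP^{(1,1)}=(U_1\cup U_2)/_\sim$ with $U_1=\{(1,u,v):1+|u|^2-|v|^2>0\}$, $U_2=\{(u,1,v):|u|^2+1-|v|^2>0\}$ and $[a,b,c]\sim[d,e,f]$ iff $(a,b,c)=(d\lambda,e\lambda,f\lambda)$ for some $\lambda\ne0$; charts $[1,u,v]\mapsto(u,v)$, $[u,1,v]\mapsto(u,v)$. Metric $g$ on each chart, for tangent vector $(du,dv)=(\xi,\eta)$: $ds^2=\frac{|\xi|^2(1-|v|^2)-|\eta|^2(1+|u|^2)+2\mathrm{Re}[(u\bar v)(\eta\bar\xi)]}{(1+|u|^2-|v|^2)^2}$. Curvature convention: in coordinates in which first derivatives of the metric vanish at the point, $R_{\alpha\beta\gamma\delta}=\tfrac12\big[\partial_\alpha\partial_\delta g_{\beta\gamma}+\partial_\beta\partial_\gamma g_{\alpha\delta}-\partial_\beta\partial_\delta g_{\alpha\gamma}-\partial_\alpha\partial_\gamma g_{\beta\delta}\big]$. *)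

theory Defs
  imports "HOL-Analysis.Analysis"
begin

text \<open>Quaternions as 4-tuples of reals (real part first), octonions as pairs of
quaternions (Cayley--Dickson).  Product types carry the real vector space structure.\<close>

type_synonym quat = "real \<times> real \<times> real \<times> real"
type_synonym oct = "quat \<times> quat"

fun qmul :: "quat \<Rightarrow> quat \<Rightarrow> quat" where
  "qmul (a1, b1, c1, d1) (a2, b2, c2, d2) =
     (a1*a2 - b1*b2 - c1*c2 - d1*d2,
      a1*b2 + b1*a2 + c1*d2 - d1*c2,
      a1*c2 - b1*d2 + c1*a2 + d1*b2,
      a1*d2 + b1*c2 - c1*b2 + d1*a2)"

fun qconj :: "quat \<Rightarrow> quat" where
  "qconj (a, b, c, d) = (a, -b, -c, -d)"

fun omul :: "oct \<Rightarrow> oct \<Rightarrow> oct" where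
  "omul (q1, q2) (p1, p2) =
     (qmul q1 p1 - qmul (qconj p2) q2, qmul p2 q1 + qmul q2 (qconj p1))"

fun oconj :: "oct \<Rightarrow> oct" where
  "oconj (q1, q2) = (qconj q1, - q2)"

definition ore :: "oct \<Rightarrow> real" where
  "ore x = fst (fst x)"

definition oinner :: "oct \<Rightarrow> oct \<Rightarrow> real" where
  "oinner a b = ore (omul a (oconj b))"

definition onorm2 :: "oct \<Rightarrow> real" where
  "onorm2 a = oinner a a"

text \<open>The metric $ds^2$ in the chart $[1,u,v]\mapsto(u,v)$: point $p=(u,v)$,
tangent vector $(\xi,\eta)$.\<close>
definition ds2 :: "oct \<times> oct \<Rightarrow> oct \<times> oct \<Rightarrow> real" where
  "ds2 p X = (let u = fst p; v = snd p; \<xi> = fst X; \<eta> = snd X in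
     (onorm2 \<xi> * (1 - onorm2 v) - onorm2 \<eta> * (1 + onorm2 u)
       + 2 * ore (omul (omul u (oconj v)) (omul \<eta> (oconj \<xi>))))
     / (1 + onorm2 u - onorm2 v)\<^sup>2)"

definition gmet :: "oct \<times> oct \<Rightarrow> oct \<times> oct \<Rightarrow> oct \<times> oct \<Rightarrow> real" where
  "gmet p X Y = (ds2 p (X + Y) - ds2 p (X - Y)) / 4"

definition d2 :: "(oct \<times> oct \<Rightarrow> real) \<Rightarrow> oct \<times> oct \<Rightarrow> oct \<times> oct \<Rightarrow> real" where
  "d2 F X W = deriv (\<lambda>t. deriv (\<lambda>s. F (s *\<^sub>R X + t *\<^sub>R W)) 0) 0"

text \<open>Curvature tensor at $P_0$ (chart origin) via the stated convention,
extended multilinearly: $R(X,Y,Z,W)=X^\alpha Y^\beta Z^\gamma W^\delta R_{\alpha\beta\gamma\delta}$.\<close>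
definition curvP0 :: "oct \<times> oct \<Rightarrow> oct \<times> oct \<Rightarrow> oct \<times> oct \<Rightarrow> oct \<times> oct \<Rightarrow> real" where
  "curvP0 X Y Z W = (1/2) *
     (d2 (\<lambda>p. gmet p Y Z) X W + d2 (\<lambda>p. gmet p X W) Y Z
      - d2 (\<lambda>p. gmet p X Z) Y W - d2 (\<lambda>p. gmet p Y W) X Z)"

end

theory Submission
  imports Defs
begin


lemma aux_eq:
  fixes x y a b :: real
  assumes "x \<noteq> 0"
  shows "(b * t * x^2 - y * (2 * (r * t * x))) / x ^ 4 = (b * t * x - 2 * y * r * t) / x ^ 3"
  using assms by (simp add: field_simps power2_eq_square power3_eq_cube power4_eq_xxxx)

lemma inner_deriv:
  fixes al b1 b2 b3 r1 r2 r3 t :: real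
  assumes "1 + r3 * t^2 \<noteq> 0"
  shows "((\<lambda>s. (al + b1 * s^2 + b2 * s * t + b3 * t^2)/(1 + r1 * s^2 + r2 * s * t + r3 * t^2)^2) has_real_derivative
     (b2 * t * (1 + r3 * t^2) - 2 * (al + b3 * t^2) * r2 * t)/(1 + r3 * t^2)^3) (at 0)"
proof -
  have "((\<lambda>s. (al + b1 * s^2 + b2 * s * t + b3 * t^2)/(1 + r1 * s^2 + r2 * s * t + r3 * t^2)^2) has_real_derivative
     (b2 * t * (1 + r3 * t^2)^2 - (al + b3 * t^2) * (2 * (r2 * t * (1 + r3 * t^2)))) / (1 + r3 * t^2) ^ 4) (at 0)"
    apply (rule DERIV_cong)
     apply (rule derivative_eq_intros refl)+
    using assms by simp_all
  then show ?thesis using aux_eq[OF assms] by simp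
qed


lemma mixed_deriv:
  fixes al b1 b2 b3 r1 r2 r3 :: real
  shows "deriv (\<lambda>t. deriv (\<lambda>s. (al + b1 * s^2 + b2 * s * t + b3 * t^2)/(1 + r1 * s^2 + r2 * s * t + r3 * t^2)^2) 0) 0
     = b2 - 2 * al * r2"
proof -
  let ?G = "\<lambda>t::real. (b2 * t * (1 + r3 * t^2) - 2 * (al + b3 * t^2) * r2 * t)/(1 + r3 * t^2)^3"
  let ?S = "{t::real. 1 + r3 * t^2 \<noteq> 0}"
  have op: "open ?S" by (intro open_Collect_neq continuous_intros)
  have "(?G has_real_derivative (b2 - 2 * al * r2)) (at 0)"
    apply (rule DERIV_cong)
     apply (rule derivative_eq_intros refl)+
    by simp_all
  then have "((\<lambda>t. deriv (\<lambda>s. (al + b1 * s^2 + b2 * s * t + b3 * t^2)/(1 + r1 * s^2 + r2 * s * t + r3 * t^2)^2) 0)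
      has_real_derivative (b2 - 2 * al * r2)) (at 0)"
    apply (rule has_field_derivative_transform_within_open[OF _ op])
    apply simp
    apply (rule DERIV_imp_deriv[symmetric], rule inner_deriv)
    apply simp
    done
  then show ?thesis by (rule DERIV_imp_deriv)
qed



lemma oct_cases: obtains x1 x2 x3 x4 x5 x6 x7 x8 where "(x::oct) = ((x1,x2,x3,x4),(x5,x6,x7,x8))"
  by (metis prod.exhaust)

lemma omul_add_left: "omul (x + y) z = omul x z + omul y z"
  by (cases x rule: oct_cases; cases y rule: oct_cases; cases z rule: oct_cases) (simp add: algebra_simps)
lemma omul_add_right: "omul z (x + y) = omul z x + omul z y"
  by (cases x rule: oct_cases; cases y rule: oct_cases; cases z rule: oct_cases) (simp add: algebra_simps)
lemma omul_diff_left: "omul (x - y) z = omul x z - omul y z"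
  by (cases x rule: oct_cases; cases y rule: oct_cases; cases z rule: oct_cases) (simp add: algebra_simps)
lemma omul_diff_right: "omul z (x - y) = omul z x - omul z y"
  by (cases x rule: oct_cases; cases y rule: oct_cases; cases z rule: oct_cases) (simp add: algebra_simps)
lemma omul_scale_left: "omul (r *\<^sub>R x) z = r *\<^sub>R omul x z"
  by (cases x rule: oct_cases; cases z rule: oct_cases) (simp add: algebra_simps)
lemma omul_scale_right: "omul z (r *\<^sub>R x) = r *\<^sub>R omul z x"
  by (cases x rule: oct_cases; cases z rule: oct_cases) (simp add: algebra_simps)
lemma oconj_add: "oconj (x + y) = oconj x + oconj y"
  by (cases x rule: oct_cases; cases y rule: oct_cases) (simp add: algebra_simps)
lemma oconj_diff: "oconj (x - y) = oconj x - oconj y"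
  by (cases x rule: oct_cases; cases y rule: oct_cases) (simp add: algebra_simps)
lemma oconj_scale: "oconj (r *\<^sub>R x) = r *\<^sub>R oconj x"
  by (cases x rule: oct_cases) (simp add: algebra_simps)
lemma oconj_oconj: "oconj (oconj x) = x"
  by (cases x rule: oct_cases) simp
lemma oconj_omul: "oconj (omul x y) = omul (oconj y) (oconj x)"
  by (cases x rule: oct_cases; cases y rule: oct_cases) (simp add: algebra_simps)
lemma ore_omul: "ore (omul x y) = oinner x (oconj y)"
  unfolding oinner_def by (simp add: oconj_oconj)
lemma oinner_comps: "oinner x y = fst (fst x) * fst (fst y) + fst (snd (fst x)) * fst (snd (fst y))
  + fst (snd (snd (fst x))) * fst (snd (snd (fst y))) + snd (snd (snd (fst x))) * snd (snd (snd (fst y)))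
  + fst (snd x) * fst (snd y) + fst (snd (snd x)) * fst (snd (snd y))
  + fst (snd (snd (snd x))) * fst (snd (snd (snd y))) + snd (snd (snd (snd x))) * snd (snd (snd (snd y)))"
  by (cases x rule: oct_cases; cases y rule: oct_cases) (simp add: oinner_def ore_def algebra_simps)
lemma oinner_sym: "oinner x y = oinner y x"
  unfolding oinner_comps by (simp add: algebra_simps)
lemma oinner_add_left: "oinner (x + y) z = oinner x z + oinner y z"
  unfolding oinner_comps by (simp add: algebra_simps)
lemma oinner_add_right: "oinner z (x + y) = oinner z x + oinner z y"
  unfolding oinner_comps by (simp add: algebra_simps)
lemma oinner_diff_left: "oinner (x - y) z = oinner x z - oinner y z"
  unfolding oinner_comps by (simp add: algebra_simps)
lemma oinner_diff_right: "oinner z (x - y) = oinner z x - oinner z y"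
  unfolding oinner_comps by (simp add: algebra_simps)
lemma oinner_scale_left: "oinner (r *\<^sub>R x) z = r * oinner x z"
  unfolding oinner_comps by (simp add: algebra_simps)
lemma oinner_scale_right: "oinner z (r *\<^sub>R x) = r * oinner z x"
  unfolding oinner_comps by (simp add: algebra_simps)

lemma N8: "oinner (omul x (oconj y)) (omul x (oconj y)) = oinner x x * oinner y y"
  unfolding oinner_comps
  by (cases x rule: oct_cases; cases y rule: oct_cases)
     (simp add: algebra_simps)



lemmas bil = omul_add_left omul_add_right omul_diff_left omul_diff_right omul_scale_left omul_scale_right
  oconj_add oconj_diff oconj_scale oinner_add_left oinner_add_right oinner_diff_left oinner_diff_right
  oinner_scale_left oinner_scale_right

lemma B1: "oinner (omul x (oconj y)) (omul z (oconj y)) = oinner x z * oinner y y"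
proof -
  have "oinner (omul (x+z) (oconj y)) (omul (x+z) (oconj y)) = oinner (x+z) (x+z) * oinner y y" by (rule N8)
  then show ?thesis by (simp add: bil N8 oinner_sym[of z x] oinner_sym[of "omul z (oconj y)"] algebra_simps)
qed

lemma R1: "oinner (omul x (oconj y)) (omul z (oconj w)) + oinner (omul x (oconj w)) (omul z (oconj y))
   = 2 * oinner x z * oinner y w"
proof -
  have "oinner (omul x (oconj (y+w))) (omul z (oconj (y+w))) = oinner x z * oinner (y+w) (y+w)" by (rule B1)
  then show ?thesis by (simp add: bil B1 oinner_sym[of w y] algebra_simps)
qed



definition gnum :: "oct \<times> oct \<Rightarrow> oct \<times> oct \<Rightarrow> oct \<times> oct \<Rightarrow> real" where
  "gnum p X Y = oinner (fst X) (fst Y) * (1 - oinner (snd p) (snd p))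
     - oinner (snd X) (snd Y) * (1 + oinner (fst p) (fst p))
     + oinner (omul (fst p) (oconj (snd p))) (omul (fst Y) (oconj (snd X)) + omul (fst X) (oconj (snd Y)))"

lemma gmet_eq: "gmet p X Y = gnum p X Y / (1 + oinner (fst p) (fst p) - oinner (snd p) (snd p))^2"
proof -
  define D where "D = (1 + oinner (fst p) (fst p) - oinner (snd p) (snd p))^2"
  have "4 * gnum p X Y =
     (oinner ((fst X + fst Y)) ((fst X + fst Y)) * (1 - oinner (snd p) (snd p)) - oinner ((snd X + snd Y)) ((snd X + snd Y)) * (1 + oinner (fst p) (fst p))
       + 2 * oinner (omul (fst p) (oconj (snd p))) (omul ((fst X + fst Y)) (oconj ((snd X + snd Y)))))
   - (oinner ((fst X - fst Y)) ((fst X - fst Y)) * (1 - oinner (snd p) (snd p)) - oinner ((snd X - snd Y)) ((snd X - snd Y)) * (1 + oinner (fst p) (fst p))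
       + 2 * oinner (omul (fst p) (oconj (snd p))) (omul ((fst X - fst Y)) (oconj ((snd X - snd Y)))))"
    unfolding gnum_def by (simp add: bil oinner_sym[of "snd Y" "snd X"] oinner_sym[of "fst Y" "fst X"] algebra_simps)
  note h = this[symmetric]
  show ?thesis
    unfolding gmet_def ds2_def Let_def onorm2_def ore_omul oconj_omul oconj_oconj D_def[symmetric]
    apply (simp add: diff_divide_distrib[symmetric])
    apply (simp only: h)
    done
qed


lemma gmet_line:
  fixes u1 u2 v1 v2 p1 p2 q1 q2 :: oct and s t :: real
  defines "K \<equiv> omul q1 (oconj p2) + omul p1 (oconj q2)"
  shows "gmet (s *\<^sub>R (u1,u2) + t *\<^sub>R (v1,v2)) (p1,p2) (q1,q2) =
    ((oinner p1 q1 - oinner p2 q2)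
     + (- oinner p1 q1 * oinner u2 u2 - oinner p2 q2 * oinner u1 u1 + oinner (omul u1 (oconj u2)) K) * s^2
     + (- 2 * oinner p1 q1 * oinner u2 v2 - 2 * oinner p2 q2 * oinner u1 v1
          + oinner (omul u1 (oconj v2) + omul v1 (oconj u2)) K) * s * t
     + (- oinner p1 q1 * oinner v2 v2 - oinner p2 q2 * oinner v1 v1 + oinner (omul v1 (oconj v2)) K) * t^2)
    / (1 + (oinner u1 u1 - oinner u2 u2) * s^2 + (2 * oinner u1 v1 - 2 * oinner u2 v2) * s * t
         + (oinner v1 v1 - oinner v2 v2) * t^2)^2"
proof -
  have num: "gnum (s *\<^sub>R (u1,u2) + t *\<^sub>R (v1,v2)) (p1,p2) (q1,q2) =
    ((oinner p1 q1 - oinner p2 q2)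
     + (- oinner p1 q1 * oinner u2 u2 - oinner p2 q2 * oinner u1 u1 + oinner (omul u1 (oconj u2)) K) * s^2
     + (- 2 * oinner p1 q1 * oinner u2 v2 - 2 * oinner p2 q2 * oinner u1 v1
          + oinner (omul u1 (oconj v2) + omul v1 (oconj u2)) K) * s * t
     + (- oinner p1 q1 * oinner v2 v2 - oinner p2 q2 * oinner v1 v1 + oinner (omul v1 (oconj v2)) K) * t^2)"
    unfolding gnum_def K_def
    by (simp add: bil oinner_sym[of v1 u1] oinner_sym[of v2 u2] algebra_simps power2_eq_square)
  have den: "1 + oinner (fst (s *\<^sub>R (u1,u2) + t *\<^sub>R (v1,v2))) (fst (s *\<^sub>R (u1,u2) + t *\<^sub>R (v1,v2)))
      - oinner (snd (s *\<^sub>R (u1,u2) + t *\<^sub>R (v1,v2))) (snd (s *\<^sub>R (u1,u2) + t *\<^sub>R (v1,v2)))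
     = 1 + (oinner u1 u1 - oinner u2 u2) * s^2 + (2 * oinner u1 v1 - 2 * oinner u2 v2) * s * t
         + (oinner v1 v1 - oinner v2 v2) * t^2"
    by (simp add: bil oinner_sym[of v1 u1] oinner_sym[of v2 u2] algebra_simps power2_eq_square)
  show ?thesis unfolding gmet_eq num den ..
qed

lemma d2_gmet:
  fixes u1 u2 v1 v2 p1 p2 q1 q2 :: oct
  shows "d2 (\<lambda>p. gmet p (p1,p2) (q1,q2)) (u1,u2) (v1,v2) =
     (- 2 * oinner p1 q1 * oinner u2 v2 - 2 * oinner p2 q2 * oinner u1 v1
          + oinner (omul u1 (oconj v2) + omul v1 (oconj u2)) (omul q1 (oconj p2) + omul p1 (oconj q2)))
     - 2 * (oinner p1 q1 - oinner p2 q2) * (2 * oinner u1 v1 - 2 * oinner u2 v2)"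
  unfolding d2_def gmet_line by (rule mixed_deriv)



lemma deriv0_line:
  fixes al b1 b2 b3 r1 r2 r3 :: real
  shows "((\<lambda>t. (al + b1 * 0^2 + b2 * 0 * t + b3 * t^2)/(1 + r1 * 0^2 + r2 * 0 * t + r3 * t^2)^2)
     has_real_derivative 0) (at 0)"
  apply (rule DERIV_cong)
   apply (rule derivative_eq_intros refl)+
  by simp_all

lemma first_part: "((\<lambda>t. gmet (t *\<^sub>R Z) X Y) has_real_derivative 0) (at 0)"
proof -
  have eq: "(\<lambda>t. gmet (t *\<^sub>R Z) X Y) =
     (\<lambda>t. gmet ((0::real) *\<^sub>R (0,0) + t *\<^sub>R (fst Z, snd Z)) (fst X, snd X) (fst Y, snd Y))"
    by (simp flip: zero_prod_def)
  show ?thesis unfolding eq gmet_line by (rule deriv0_line)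
qed

lemma curv_formula:
  fixes a b c d e f g h :: oct
  shows "curvP0 (a, b) (c, d) (e, f) (g, h) =
        4 * oinner a e * oinner c g - 4 * oinner c e * oinner a g
      + 4 * oinner b f * oinner d h - 4 * oinner d f * oinner b h
      + oinner (omul e (oconj d)) (omul g (oconj b))
      - oinner (omul e (oconj b)) (omul g (oconj d))
      + oinner (omul c (oconj f)) (omul a (oconj h))
      - oinner (omul a (oconj f)) (omul c (oconj h))
      + oinner (omul a (oconj d) - omul c (oconj b)) (omul g (oconj f) - omul e (oconj h))"
proof -
  have r1: "oinner (omul a (oconj h)) (omul e (oconj d)) + oinner (omul a (oconj d)) (omul e (oconj h)) = 2 * oinner a e * oinner d h"
    using R1[of a h e d] oinner_sym[of h d] by simp
  have r2: "oinner (omul g (oconj b)) (omul c (oconj f)) + oinner (omul c (oconj b)) (omul g (oconj f)) = 2 * oinner c g * oinner b f"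
    using R1[of g b c f] oinner_sym[of g c] oinner_sym[of "omul g (oconj f)"] by simp
  have r3: "oinner (omul c (oconj h)) (omul e (oconj b)) + oinner (omul c (oconj b)) (omul e (oconj h)) = 2 * oinner c e * oinner b h"
    using R1[of c h e b] oinner_sym[of h b] by simp
  have r4: "oinner (omul g (oconj d)) (omul a (oconj f)) + oinner (omul a (oconj d)) (omul g (oconj f)) = 2 * oinner a g * oinner d f"
    using R1[of g d a f] oinner_sym[of g a] oinner_sym[of "omul g (oconj f)"] by simp
  have s: "oinner (omul c (oconj f)) (omul g (oconj b)) = oinner (omul g (oconj b)) (omul c (oconj f))"
    "oinner (omul c (oconj f)) (omul a (oconj h)) = oinner (omul a (oconj h)) (omul c (oconj f))"
    "oinner (omul e (oconj d)) (omul g (oconj b)) = oinner (omul g (oconj b)) (omul e (oconj d))"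
    "oinner (omul e (oconj d)) (omul a (oconj h)) = oinner (omul a (oconj h)) (omul e (oconj d))"
    "oinner (omul a (oconj f)) (omul g (oconj d)) = oinner (omul g (oconj d)) (omul a (oconj f))"
    "oinner (omul a (oconj f)) (omul c (oconj h)) = oinner (omul c (oconj h)) (omul a (oconj f))"
    "oinner (omul e (oconj b)) (omul g (oconj d)) = oinner (omul g (oconj d)) (omul e (oconj b))"
    "oinner (omul e (oconj b)) (omul c (oconj h)) = oinner (omul c (oconj h)) (omul e (oconj b))"
    by (simp_all add: oinner_sym)
  show ?thesis
    unfolding curvP0_def d2_gmet
    unfolding bil s
    using r1 r2 r3 r4 by (simp add: algebra_simps)
qed


theorem corollary7p5:
  fixes a b c d e f g h :: oct
  shows "(\<forall>X Y Z. ((\<lambda>t. gmet (t *\<^sub>R Z) X Y) has_real_derivative 0) (at 0))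
    \<and> curvP0 (a, b) (c, d) (e, f) (g, h) =
        4 * oinner a e * oinner c g - 4 * oinner c e * oinner a g
      + 4 * oinner b f * oinner d h - 4 * oinner d f * oinner b h
      + oinner (omul e (oconj d)) (omul g (oconj b))
      - oinner (omul e (oconj b)) (omul g (oconj d))
      + oinner (omul c (oconj f)) (omul a (oconj h))
      - oinner (omul a (oconj f)) (omul c (oconj h))
      + oinner (omul a (oconj d) - omul c (oconj b)) (omul g (oconj f) - omul e (oconj h))"
  using first_part curv_formula by blast

end
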